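(* Let $q$ be a prime power with $q-1=ds$, $d,s$ positive integers, let $r$ be an integer with $1\le r<s$, let $h(x)\in\mathbb{F}_q[x]$, let $\xi$ be a primitive element of $\mathbb{F}_q$ and $\omega=\xi^s$. If $f(x)=x^rh(x^s)$ is a permutation polynomial of $\mathbb{F}_q$, then its inverse over $\mathbb{F}_q$ is given by $$f^{-1}(x)=\frac1d\sum_{i=0}^{d-1}\sum_{j=0}^{d-1}\omega^{i(t-jr)}\left(\frac{x}{h(\omega^i)}\right)^{\tilde r+js},$$ where $\tilde r,t\in\mathbb{Z}$ satisfy $1\le\tilde r<s$ and $r\tilde r+st=1$.
   Context: A polynomial $f\in\mathbb{F}_q[x]$ is a permutation polynomial of $\mathbb{F}_q$ if it induces a bijection of $\mathbb{F}_q$. A polynomial $g$ is the inverse of $f$ over $\mathbb{F}_q$ if $g(f(c))=c$ for all $c\in\mathbb{F}_q$. Since $d\mid q-1$, $1/d$ makes sense in $\mathbb{F}_q$. *)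

theory Defs
  imports "HOL-Computational_Algebra.Polynomial" "HOL-Library.Cardinality"
begin

text \<open>Finite fields F_q are modelled by a type of class field and finite; q = CARD('a).\<close>

definition primitive_element :: "'a::{field,finite} \<Rightarrow> bool" where
  "primitive_element \<xi> \<longleftrightarrow> \<xi> \<noteq> 0 \<and> (\<forall>y. y \<noteq> 0 \<longrightarrow> (\<exists>k::nat. y = \<xi> ^ k))"

definition permutation_polynomial :: "'a::{field,finite} poly \<Rightarrow> bool" where
  "permutation_polynomial f \<longleftrightarrow> bij (poly f)"

definition is_inverse_poly :: "'a::{field,finite} poly \<Rightarrow> 'a poly \<Rightarrow> bool" where
  "is_inverse_poly g f \<longleftrightarrow> (\<forall>c. poly g (poly f c) = c)"

end

theory Submission imports Defs begin

lemma fermat_ff: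
  fixes x :: "'a::{field,finite}"
  assumes "x \<noteq> 0"
  shows "x ^ (CARD('a) - 1) = 1"
proof -
  let ?U = "UNIV - {0::'a}"
  have cU: "card ?U = CARD('a) - 1" by (simp add: card_Diff_singleton)
  have inj: "inj_on (\<lambda>y. x * y) ?U" using assms by (auto simp: inj_on_def)
  have img: "(\<lambda>y. x * y) ` ?U = ?U"
  proof
    show "(\<lambda>y. x * y) ` ?U \<subseteq> ?U" using assms by auto
    show "?U \<subseteq> (\<lambda>y. x * y) ` ?U"
    proof
      fix y assume "y \<in> ?U"
      then have "y = x * (inverse x * y)" "inverse x * y \<in> ?U" using assms by auto
      then show "y \<in> (\<lambda>y. x * y) ` ?U" by blast
    qed
  qed
  have "prod (\<lambda>y. y) ?U = prod (\<lambda>y. x * y) ?U"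
    using prod.reindex[OF inj, of "\<lambda>y. y"] img by simp
  also have "\<dots> = x ^ card ?U * prod (\<lambda>y. y) ?U"
    by (simp add: prod.distrib)
  finally have "1 * prod (\<lambda>y. y) ?U = x ^ card ?U * prod (\<lambda>y. y) ?U" by simp
  moreover have nz: "prod (\<lambda>y. y) ?U \<noteq> 0" by simp
  ultimately have "1 = x ^ card ?U" using mult_right_cancel[OF nz] by blast
  then show ?thesis using cU by simp
qed

lemma ofnat_card0: "(of_nat CARD('a::{field,finite}) :: 'a) = 0"
proof -
  have inj: "inj (\<lambda>x::'a. x + 1)" by (simp add: inj_on_def)
  have im: "range (\<lambda>x::'a. x + 1) = UNIV"
    by (metis (no_types, lifting) diff_add_cancel surj_def)
  have "sum (\<lambda>x. x) (UNIV::'a set) = sum (\<lambda>x. x + 1) UNIV"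
    using sum.reindex[OF inj, of "\<lambda>x. x"] im by simp
  also have "\<dots> = sum (\<lambda>x. x) UNIV + of_nat CARD('a)" by (simp add: sum.distrib)
  finally show ?thesis by simp
qed

lemma ofnat_ne0:
  assumes "CARD('a::{field,finite}) - 1 = d * s"
  shows "(of_nat d :: 'a) \<noteq> 0"
proof
  assume d0: "(of_nat d :: 'a) = 0"
  have "CARD('a) > 0" by simp
  then have "CARD('a) = d * s + 1" using assms by linarith
  then have "(of_nat CARD('a) :: 'a) = of_nat d * of_nat s + 1" by simp
  then show False using d0 ofnat_card0[where 'a='a] by simp
qed

lemma geom_roots:
  fixes z :: "'a::field"
  assumes "z ^ d = 1"
  shows "(\<Sum>j<d. z ^ j) = (if z = 1 then of_nat d else 0)"
proof (cases "z = 1")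
  case False
  have "1 - z ^ d = (1 - z) * (\<Sum>j<d. z ^ j)" by (rule one_diff_power_eq)
  then show ?thesis using assms False by simp
qed simp

lemma alg1:
  fixes c W :: "'a::field"
  assumes "c ^ s = W" "r * r' = 1 + s * n"
  shows "(c ^ r) ^ (r' + j * s) = c * W ^ n * (W ^ r) ^ j"
proof -
  have "(c ^ r) ^ (r' + j * s) = c ^ (r * r' + s * (r * j))"
    by (simp add: power_mult[symmetric] algebra_simps)
  also have "\<dots> = c * (c ^ s) ^ n * ((c ^ s) ^ r) ^ j"
    using assms(2) by (simp add: power_add power_mult[symmetric] algebra_simps)
  finally show ?thesis using assms(1) by simp
qed

theorem corollary4p5:
  fixes h :: "'a::{field,finite} poly"
    and d s r r' :: nat and t :: int and \<xi> :: 'a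
  assumes "d > 0" "s > 0" "CARD('a) - 1 = d * s"
    and "1 \<le> r" "r < s"
    and "primitive_element \<xi>"
    and "permutation_polynomial (monom 1 r * pcompose h (monom 1 s))"
    and "1 \<le> r'" "r' < s" "int r * int r' + int s * t = 1"
  shows "is_inverse_poly
     (smult (inverse (of_nat d))
        (\<Sum>i<d. \<Sum>j<d.
           smult ((\<xi> ^ s) powi (int i * (t - int j * int r)) * inverse (poly h ((\<xi> ^ s) ^ i)) ^ (r' + j * s))
                 (monom 1 (r' + j * s))))
     (monom 1 r * pcompose h (monom 1 s))"
proof -
  define q where "q = CARD('a)"
  define \<omega> where "\<omega> = \<xi> ^ s"
  define F where "F = (\<lambda>c::'a. c ^ r * poly h (c ^ s))"
  define H where "H = (\<lambda>i::nat. poly h (\<omega> ^ i))"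
  have tle: "t \<le> 0"
  proof (rule ccontr)
    assume "\<not> t \<le> 0"
    then have "t \<ge> 1" "int s \<ge> 1" using assms(2) by auto
    then have "int s * t \<ge> 1" using mult_mono[of 1 "int s" 1 t] by simp
    moreover have "int r * int r' \<ge> 1" using assms(4,8) mult_mono[of 1 "int r" 1 "int r'"] by simp
    ultimately show False using assms(10) by linarith
  qed
  then obtain n :: nat where tn: "t = - int n" by (metis neg_0_le_iff_le nonneg_eq_int minus_minus)
  have rr: "r * r' = 1 + s * n"
  proof -
    have "int (r * r') = int (1 + s * n)" using assms(10) tn by simp
    then show ?thesis by (simp only: of_nat_eq_iff)
  qed
  have xi0: "\<xi> \<noteq> 0" using assms(6) by (simp add: primitive_element_def)
  have w0: "\<omega> \<noteq> 0" using xi0 by (simp add: \<omega>_def)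
  have qpos: "q - 1 > 0" using assms(1,2,3) by (simp add: q_def)
  have ferm: "\<And>x::'a. x \<noteq> 0 \<Longrightarrow> x ^ (q - 1) = 1" unfolding q_def by (rule fermat_ff)
  have wd: "\<omega> ^ d = 1"
  proof -
    have "\<omega> ^ d = \<xi> ^ (s * d)" by (simp add: \<omega>_def power_mult)
    also have "s * d = q - 1" using assms(3) by (simp add: q_def)
    finally show ?thesis using ferm[OF xi0] by simp
  qed
  have xi_all: "\<And>y. y \<noteq> 0 \<Longrightarrow> \<exists>k<q-1. y = \<xi> ^ k"
  proof -
    fix y :: 'a assume "y \<noteq> 0"
    then obtain k where k: "y = \<xi> ^ k" using assms(6) by (auto simp: primitive_element_def)
    have "\<xi> ^ k = \<xi> ^ ((q-1) * (k div (q-1)) + k mod (q-1))" by simp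
    also have "\<dots> = (\<xi> ^ (q-1)) ^ (k div (q-1)) * \<xi> ^ (k mod (q-1))"
      by (simp only: power_add power_mult)
    finally have "\<xi> ^ k = (\<xi> ^ (q-1)) ^ (k div (q-1)) * \<xi> ^ (k mod (q-1))" .
    then have "y = \<xi> ^ (k mod (q-1))" using k ferm[OF xi0] by simp
    then show "\<exists>k<q-1. y = \<xi> ^ k" using qpos mod_less_divisor by blast
  qed
  have inj_xi: "inj_on (\<lambda>k. \<xi> ^ k) {..<q-1}"
  proof -
    have "(\<lambda>k. \<xi> ^ k) ` {..<q-1} = UNIV - {0}"
      using xi_all xi0 by auto
    then have "card ((\<lambda>k. \<xi> ^ k) ` {..<q-1}) = card {..<q-1}"
      by (simp add: card_Diff_singleton q_def)
    then show ?thesis by (simp add: eq_card_imp_inj_on)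
  qed
  have w_inj: "\<And>i k. i < d \<Longrightarrow> k < d \<Longrightarrow> \<omega> ^ i = \<omega> ^ k \<Longrightarrow> i = k"
  proof -
    fix i k assume ik: "i < d" "k < d" "\<omega> ^ i = \<omega> ^ k"
    have "s * i < q - 1" "s * k < q - 1" using ik assms(2,3) by (simp_all add: q_def mult.commute)
    moreover have "\<xi> ^ (s * i) = \<xi> ^ (s * k)" using ik(3) by (simp add: \<omega>_def power_mult)
    ultimately have "s * i = s * k" using inj_xi unfolding inj_on_def by blast
    then show "i = k" using assms(2) by simp
  qed
  have polyf: "poly (monom 1 r * pcompose h (monom 1 s)) = F"
    by (rule ext) (simp add: F_def poly_monom poly_pcompose)
  have injF: "inj F" using assms(7) polyf by (simp add: permutation_polynomial_def bij_def)
  have F0: "F 0 = 0" using assms(4) by (simp add: F_def)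
  have Fxi: "\<And>i. F (\<xi> ^ i) = \<xi> ^ (i * r) * H i"
    by (simp add: F_def H_def \<omega>_def power_mult[symmetric] mult.commute)
  have Hnz: "\<And>i. H i \<noteq> 0"
  proof
    fix i assume "H i = 0"
    then have "F (\<xi> ^ i) = F 0" using Fxi F0 by simp
    then have "\<xi> ^ i = 0" using injF by (simp add: inj_eq)
    then show False using xi0 by simp
  qed
  have key: "\<And>i k. i < d \<Longrightarrow> k < d \<Longrightarrow> \<omega> ^ (k * r) * H k ^ s = \<omega> ^ (i * r) * H i ^ s \<Longrightarrow> i = k"
  proof -
    fix i k assume ik: "i < d" "k < d" and eq: "\<omega> ^ (k * r) * H k ^ s = \<omega> ^ (i * r) * H i ^ s"
    define c1 where "c1 = \<xi> ^ k"
    define c2 where "c2 = \<xi> ^ i"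
    have c1s: "c1 ^ s = \<omega> ^ k" and c2s: "c2 ^ s = \<omega> ^ i"
      by (simp_all add: c1_def c2_def \<omega>_def power_mult[symmetric] mult.commute)
    have F1: "F c1 \<noteq> 0" using Hnz xi0 by (simp add: c1_def Fxi)
    define \<zeta> where "\<zeta> = F c2 / F c1"
    have zs: "\<zeta> ^ s = 1"
    proof -
      have Fp: "F cc ^ s = \<omega> ^ (ii * r) * H ii ^ s" if "cc ^ s = \<omega> ^ ii" for cc ii
      proof -
        have "F cc ^ s = (cc ^ r) ^ s * H ii ^ s" by (simp add: F_def H_def that power_mult_distrib)
        also have "(cc ^ r) ^ s = (cc ^ s) ^ r" by (metis power_mult mult.commute)
        also have "\<dots> = \<omega> ^ (ii * r)" by (simp add: that power_mult)
        finally show ?thesis .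
      qed
      have "\<zeta> ^ s = F c2 ^ s / F c1 ^ s" by (simp add: \<zeta>_def power_divide)
      also have "\<dots> = 1" using eq F1 Hnz w0 by (simp add: Fp[OF c1s] Fp[OF c2s])
      finally show ?thesis .
    qed
    have z0: "\<zeta> \<noteq> 0" using F1 Fxi Hnz xi0 by (simp add: \<zeta>_def c2_def)
    define \<eta> where "\<eta> = inverse \<zeta> ^ r'"
    have es: "\<eta> ^ s = 1"
    proof -
      have "\<eta> ^ s = inverse ((\<zeta> ^ s) ^ r')" by (simp add: \<eta>_def power_inverse) (metis power_mult mult.commute)
      then show ?thesis by (simp add: zs)
    qed
    have er: "\<eta> ^ r = inverse \<zeta>"
    proof -
      have "\<eta> ^ r = inverse \<zeta> ^ (1 + s * n)" by (simp add: \<eta>_def power_mult[symmetric] rr mult.commute)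
      also have "\<dots> = inverse \<zeta>" by (simp add: power_add power_mult power_inverse zs)
      finally show ?thesis .
    qed
    define c3 where "c3 = c2 * \<eta>"
    have c3s: "c3 ^ s = c2 ^ s" by (simp add: c3_def power_mult_distrib es)
    have "F c3 = F c2 * \<eta> ^ r" by (simp add: F_def c3s) (simp add: c3_def power_mult_distrib)
    also have "\<dots> = F c1" using F1 z0 by (simp add: er \<zeta>_def)
    finally have "c3 = c1" using injF by (simp add: inj_eq)
    then have "\<omega> ^ i = \<omega> ^ k" using c3s c1s c2s by simp
    then show "i = k" using w_inj ik by blast
  qed
  show ?thesis
    unfolding is_inverse_poly_def polyf
  proof
    fix c :: 'a
    show "poly (smult (inverse (of_nat d))
        (\<Sum>i<d. \<Sum>j<d.
           smult ((\<xi> ^ s) powi (int i * (t - int j * int r)) * inverse (poly h ((\<xi> ^ s) ^ i)) ^ (r' + j * s))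
                 (monom 1 (r' + j * s)))) (F c) = c"
    proof (cases "c = 0")
      case True
      have "r' \<noteq> 0" using assms(8) by simp
      then show ?thesis using F0 True by (simp add: poly_sum poly_monom power_0_left)
    next
      case False
      obtain m where "c = \<xi> ^ m" using False assms(6) by (auto simp: primitive_element_def)
      then have "c ^ s = \<omega> ^ m" by (simp add: \<omega>_def power_mult[symmetric] mult.commute)
      also have "\<omega> ^ m = \<omega> ^ (d * (m div d) + m mod d)" by simp
      also have "\<dots> = \<omega> ^ (m mod d)" by (simp only: power_add power_mult wd) simp
      finally have cs: "c ^ s = \<omega> ^ (m mod d)" .
      define k where "k = m mod d"
      have kd: "k < d" using assms(1) by (simp add: k_def)
      have w0: "\<omega> \<noteq> 0" using xi0 by (simp add: \<omega>_def)
      have Fc: "F c = c ^ r * H k" by (simp add: F_def H_def cs k_def)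
      define a where "a = (\<lambda>i. H k * inverse (H i))"
      define u where "u = (\<lambda>i. \<omega> ^ k * inverse (\<omega> ^ i))"
      define z where "z = (\<lambda>i. u i ^ r * a i ^ s)"
      have trm: "(\<omega> powi (int i * (t - int j * int r)) * inverse (H i) ^ (r' + j * s)) * F c ^ (r' + j * s)
           = c * a i ^ r' * u i ^ n * z i ^ j" for i j
      proof -
        have e1: "\<omega> powi (int i * (t - int j * int r)) = inverse (\<omega> ^ i) ^ n * (inverse (\<omega> ^ i) ^ r) ^ j"
        proof -
          have "int i * (t - int j * int r) = - int (i * n + i * j * r)" by (simp add: tn algebra_simps)
          then have "\<omega> powi (int i * (t - int j * int r)) = \<omega> powi (- int (i * n + i * j * r))"
            by (simp only:)
          also have "\<dots> = inverse (\<omega> ^ (i * n + i * j * r))"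
            by (simp only: power_int_minus power_int_of_nat)
          also have "\<dots> = inverse (\<omega> ^ i) ^ n * (inverse (\<omega> ^ i) ^ r) ^ j"
            by (simp add: power_inverse power_add power_mult[symmetric] mult_ac)
          finally show ?thesis .
        qed
        have e2: "inverse (H i) ^ (r' + j * s) * F c ^ (r' + j * s) = (c ^ r) ^ (r' + j * s) * a i ^ (r' + j * s)"
          by (simp add: Fc a_def power_mult_distrib[symmetric] mult_ac)
        have e3: "(c ^ r) ^ (r' + j * s) = c * (\<omega> ^ k) ^ n * ((\<omega> ^ k) ^ r) ^ j"
          using alg1[OF cs[folded k_def] rr] .
        show ?thesis
          unfolding e1 mult.assoc e2 e3
          by (simp add: z_def u_def power_mult_distrib power_add power_mult[symmetric] mult_ac)
      qed
      have zd: "z i ^ d = 1" if "i < d" for i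
      proof -
        have "u i ^ d = 1" using wd w0 by (simp add: u_def power_mult_distrib power_inverse
              power_mult[symmetric] mult.commute[of _ d]) (simp add: power_mult)
        moreover have "a i ^ (s * d) = 1" using ferm[of "a i"] Hnz assms(3)
          by (simp add: a_def q_def mult.commute)
        ultimately show ?thesis
          by (simp add: z_def power_mult_distrib power_mult[symmetric] mult.commute[of _ d])
             (simp add: power_mult)
      qed
      have z1: "z i = 1 \<longleftrightarrow> i = k" if "i < d" for i
      proof
        assume "z i = 1"
        then have "\<omega> ^ (k * r) * H k ^ s = \<omega> ^ (i * r) * H i ^ s"
          using w0 Hnz by (simp add: z_def u_def a_def power_mult_distrib power_inverse
              power_mult field_simps)
        then show "i = k" using key that kd by blast
      next
        assume "i = k" then show "z i = 1" using w0 Hnz by (simp add: z_def u_def a_def)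
      qed
      have inner: "(\<Sum>j<d. (\<omega> powi (int i * (t - int j * int r)) * inverse (H i) ^ (r' + j * s)) * F c ^ (r' + j * s))
            = (if i = k then of_nat d * c else 0)" if "i < d" for i
      proof -
        have "(\<Sum>j<d. (\<omega> powi (int i * (t - int j * int r)) * inverse (H i) ^ (r' + j * s)) * F c ^ (r' + j * s))
            = c * a i ^ r' * u i ^ n * (\<Sum>j<d. z i ^ j)"
          by (simp add: trm sum_distrib_left)
        also have "\<dots> = (if i = k then of_nat d * c else 0)"
          using geom_roots[OF zd[OF that]] z1[OF that] Hnz w0
          by (auto simp: a_def u_def)
        finally show ?thesis .
      qed
      have "(\<Sum>i<d. \<Sum>j<d. (\<omega> powi (int i * (t - int j * int r)) * inverse (H i) ^ (r' + j * s)) * F c ^ (r' + j * s))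
          = (\<Sum>i<d. if i = k then of_nat d * c else 0)"
        by (rule sum.cong) (auto simp: inner)
      also have "\<dots> = of_nat d * c" using kd by simp
      finally have S: "(\<Sum>i<d. \<Sum>j<d. (\<omega> powi (int i * (t - int j * int r)) * inverse (H i) ^ (r' + j * s)) * F c ^ (r' + j * s)) = of_nat d * c" .
      show ?thesis
        using S[unfolded H_def] ofnat_ne0[OF assms(3)]
        by (simp add: poly_sum poly_monom \<omega>_def[symmetric])
    qed
  qed
qed
end
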